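(* Let $\mathcal{U}$ be a UEC-representative. Then the partially directed graph $\mathtt{init\_CPDAG}(\mathcal{U})$ is a CPDAG, i.e. it equals the CPDAG of the Markov equivalence class of some DAG.
   Context: For a DAG $\mathcal{D}$, a trek is a path with no repeated vertices and no collider; the unconditional dependence graph $\mathcal{U}^\mathcal{D}$ has an edge between distinct $v,w$ iff there is a trek between them; a UEC-representative is an undirected graph equal to $\mathcal{U}^\mathcal{D}$ for some DAG on the same vertex set. $\mathtt{init\_CPDAG}(\mathcal{U})$ is the partially directed graph obtained from $\mathcal{U}$ as follows: for every induced path $v - v' - v''$ in $\mathcal{U}$ ($v,v''$ nonadjacent) orient its edges as $v\to v'\leftarrow v''$; thus an edge $\{a,b\}$ receives orientation $a\to b$ iff some neighbor of $b$ other than $a$ is nonadjacent to $a$. Edges receiving both orientations (bidirected) are removed; edges receiving exactly one orientation become directed accordingly; edges receiving none stay undirected. The CPDAG of a DAG $\mathcal{D}$ is the partially directed graph with the skeleton of $\mathcal{D}$ in which $i\to j$ is directed iff $i\to j$ is an edge of every DAG Markov equivalent to $\mathcal{D}$, all other edges being undirected (Markov equivalent: same skeleton and v-structures). *)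

theory Defs
  imports Main
begin

definition is_dag :: "'a set \<Rightarrow> ('a \<times> 'a) set \<Rightarrow> bool" where
  "is_dag V D \<longleftrightarrow> finite V \<and> D \<subseteq> V \<times> V \<and> acyclic D"

definition is_path :: "('a \<times> 'a) set \<Rightarrow> 'a list \<Rightarrow> bool" where
  "is_path D xs \<longleftrightarrow> xs \<noteq> [] \<and> distinct xs \<and>
     (\<forall>i. Suc i < length xs \<longrightarrow> (xs!i, xs!Suc i) \<in> D \<or> (xs!Suc i, xs!i) \<in> D)"

definition no_collider :: "('a \<times> 'a) set \<Rightarrow> 'a list \<Rightarrow> bool" where
  "no_collider D xs \<longleftrightarrow>
     (\<forall>i. Suc i < length xs \<longrightarrow> 0 < i \<longrightarrow>
        \<not> ((xs!(i - 1), xs!i) \<in> D \<and> (xs!Suc i, xs!i) \<in> D))"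

definition is_trek :: "('a \<times> 'a) set \<Rightarrow> 'a list \<Rightarrow> bool" where
  "is_trek D xs \<longleftrightarrow> is_path D xs \<and> no_collider D xs"

definition trek_between :: "('a \<times> 'a) set \<Rightarrow> 'a \<Rightarrow> 'a \<Rightarrow> bool" where
  "trek_between D v w \<longleftrightarrow> (\<exists>xs. is_trek D xs \<and> hd xs = v \<and> last xs = w)"

definition udg :: "'a set \<Rightarrow> ('a \<times> 'a) set \<Rightarrow> ('a \<times> 'a) set" where
  "udg V D = {(v, w). v \<in> V \<and> w \<in> V \<and> v \<noteq> w \<and> trek_between D v w}"

definition UEC_representative :: "'a set \<Rightarrow> ('a \<times> 'a) set \<Rightarrow> bool" where
  "UEC_representative V U \<longleftrightarrow> (\<exists>D. is_dag V D \<and> U = udg V D)"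

(* A partially directed graph: (directed edges, undirected edges stored symmetrically). *)
type_synonym 'a pdg = "('a \<times> 'a) set \<times> ('a \<times> 'a) set"

definition orient :: "('a \<times> 'a) set \<Rightarrow> 'a \<Rightarrow> 'a \<Rightarrow> bool" where
  "orient U a b \<longleftrightarrow> (a, b) \<in> U \<and> (\<exists>c. (c, b) \<in> U \<and> c \<noteq> a \<and> (a, c) \<notin> U)"

definition init_CPDAG :: "('a \<times> 'a) set \<Rightarrow> 'a pdg" where
  "init_CPDAG U =
     ({(a, b). orient U a b \<and> \<not> orient U b a},
      {(a, b). (a, b) \<in> U \<and> \<not> orient U a b \<and> \<not> orient U b a})"

definition skeleton :: "('a \<times> 'a) set \<Rightarrow> ('a \<times> 'a) set" where
  "skeleton D = D \<union> D\<inverse>"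

definition v_structures :: "('a \<times> 'a) set \<Rightarrow> ('a \<times> 'a \<times> 'a) set" where
  "v_structures D = {(a, c, b). (a, c) \<in> D \<and> (b, c) \<in> D \<and> a \<noteq> b \<and> (a, b) \<notin> skeleton D}"

definition markov_equiv :: "('a \<times> 'a) set \<Rightarrow> ('a \<times> 'a) set \<Rightarrow> bool" where
  "markov_equiv D D' \<longleftrightarrow> skeleton D = skeleton D' \<and> v_structures D = v_structures D'"

definition cpdag_dir :: "'a set \<Rightarrow> ('a \<times> 'a) set \<Rightarrow> ('a \<times> 'a) set" where
  "cpdag_dir V D = {(i, j). (i, j) \<in> D \<and> (\<forall>D'. is_dag V D' \<and> markov_equiv D D' \<longrightarrow> (i, j) \<in> D')}"

definition cpdag :: "'a set \<Rightarrow> ('a \<times> 'a) set \<Rightarrow> 'a pdg" where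
  "cpdag V D =
     (cpdag_dir V D,
      {(i, j). (i, j) \<in> skeleton D \<and> (i, j) \<notin> cpdag_dir V D \<and> (j, i) \<notin> cpdag_dir V D})"

end

theory Submission
  imports Defs
begin


lemma walk_anc:
  assumes "xs \<noteq> []" "\<forall>i. Suc i < length xs \<longrightarrow> (xs!i, xs!Suc i) \<in> D \<or> (xs!Suc i, xs!i) \<in> D" "no_collider D xs"
  shows "(hd xs, last xs) \<in> D\<^sup>* \<or> (2 \<le> length xs \<and> (xs!1, xs!0) \<in> D \<and> (\<exists>z. (z, hd xs) \<in> D\<^sup>* \<and> (z, last xs) \<in> D\<^sup>*))"
  using assms
proof (induction xs)
  case Nil then show ?case by simp
next
  case (Cons x xs)
  show ?case
  proof (cases "xs = []")
    case True then show ?thesis by simp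
  next
    case False
    have adj: "\<forall>i. Suc i < length xs \<longrightarrow> (xs!i, xs!Suc i) \<in> D \<or> (xs!Suc i, xs!i) \<in> D"
    proof (intro allI impI)
      fix i assume "Suc i < length xs"
      then show "(xs!i, xs!Suc i) \<in> D \<or> (xs!Suc i, xs!i) \<in> D" using Cons.prems(2)[rule_format, of "Suc i"] by simp
    qed
    have nc: "no_collider D xs"
      unfolding no_collider_def
    proof (intro allI impI)
      fix i assume a: "Suc i < length xs" "0 < i"
      then obtain j where j: "i = Suc j" by (cases i) auto
      show "\<not> ((xs!(i-1), xs!i) \<in> D \<and> (xs!Suc i, xs!i) \<in> D)"
        using Cons.prems(3) a j unfolding no_collider_def
        by (auto dest!: spec[of _ "Suc i"])
    qed
    note IH = Cons.IH[OF False adj nc]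
    have y0: "xs!0 = hd xs" using False by (simp add: hd_conv_nth)
    have lst: "last (x#xs) = last xs" using False by simp
    have e: "(x, hd xs)\<in>D \<or> (hd xs, x)\<in>D" using Cons.prems(2)[rule_format, of 0] False y0 by simp
    show ?thesis
    proof (cases "(hd xs, x) \<in> D")
      case True
      have "\<exists>z. (z, x) \<in> D\<^sup>* \<and> (z, last xs) \<in> D\<^sup>*"
        using IH True by (meson converse_rtrancl_into_rtrancl r_into_rtrancl rtrancl_trans)
      then show ?thesis using True False lst y0 by (simp add: Suc_leI)
    next
      case nb: False
      with e have xy: "(x, hd xs) \<in> D" by simp
      have "(hd xs, last xs) \<in> D\<^sup>*"
      proof (rule ccontr)
        assume "(hd xs, last xs) \<notin> D\<^sup>*"
        with IH have "2 \<le> length xs" "(xs!1, xs!0) \<in> D" by auto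
        then show False using Cons.prems(3) xy y0 unfolding no_collider_def
          by (auto dest!: spec[of _ 1])
      qed
      then show ?thesis using xy lst by (simp add: converse_rtrancl_into_rtrancl)
    qed
  qed
qed

lemma trek_anc: "trek_between D u v \<Longrightarrow> \<exists>z. (z, u) \<in> D\<^sup>* \<and> (z, v) \<in> D\<^sup>*"
  unfolding trek_between_def is_trek_def is_path_def
  using walk_anc by blast

lemma trek_take: assumes "is_trek D xs" "k < length xs" shows "is_trek D (take (Suc k) xs)"
  using assms unfolding is_trek_def is_path_def no_collider_def by auto

lemma trek_snoc: assumes "is_trek D xs" "(last xs, v) \<in> D" "(v, last xs) \<notin> D" "v \<notin> set xs"
  shows "is_trek D (xs @ [v])"
proof -
  have ne: "xs \<noteq> []" using assms(1) unfolding is_trek_def is_path_def by simp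
  have l: "last xs = xs ! (length xs - 1)" using ne by (simp add: last_conv_nth)
  show ?thesis
    unfolding is_trek_def is_path_def no_collider_def
  proof (intro conjI allI impI)
    show "xs @ [v] \<noteq> []" by simp
    show "distinct (xs @ [v])" using assms(1,4) unfolding is_trek_def is_path_def by simp
  next
    fix i assume i: "Suc i < length (xs @ [v])"
    show "((xs @ [v]) ! i, (xs @ [v]) ! Suc i) \<in> D \<or> ((xs @ [v]) ! Suc i, (xs @ [v]) ! i) \<in> D"
    proof (cases "Suc i < length xs")
      case True then show ?thesis using assms(1) unfolding is_trek_def is_path_def by (auto simp: nth_append)
    next
      case False
      then have "i = length xs - 1" using i by simp
      then show ?thesis using assms(2) l ne False by (auto simp: nth_append)
    qed
  next
    fix i assume i: "Suc i < length (xs @ [v])" "0 < i"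
    show "\<not> (((xs @ [v]) ! (i - 1), (xs @ [v]) ! i) \<in> D \<and> ((xs @ [v]) ! Suc i, (xs @ [v]) ! i) \<in> D)"
    proof (cases "Suc i < length xs")
      case True then show ?thesis using assms(1) i unfolding is_trek_def no_collider_def by (auto simp: nth_append)
    next
      case False
      then have "i = length xs - 1" using i by simp
      then show ?thesis using assms(3) l ne False i by (auto simp: nth_append)
    qed
  qed
qed

lemma trek_rev: assumes "is_trek D xs" shows "is_trek D (rev xs)"
proof -
  let ?n = "length xs"
  show ?thesis
    unfolding is_trek_def is_path_def no_collider_def
  proof (intro conjI allI impI)
    show "rev xs \<noteq> []" "distinct (rev xs)" using assms unfolding is_trek_def is_path_def by auto
  next
    fix i assume i: "Suc i < length (rev xs)"
    define j where "j = ?n - Suc (Suc i)"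
    have "Suc j < ?n" using i j_def by simp
    then have "(xs!j, xs!Suc j) \<in> D \<or> (xs!Suc j, xs!j) \<in> D" using assms unfolding is_trek_def is_path_def by blast
    moreover have "rev xs ! i = xs ! Suc j" "rev xs ! Suc i = xs ! j" using i j_def by (auto simp: rev_nth Suc_diff_Suc)
    ultimately show "(rev xs ! i, rev xs ! Suc i) \<in> D \<or> (rev xs ! Suc i, rev xs ! i) \<in> D" by auto
  next
    fix i assume i: "Suc i < length (rev xs)" "0 < i"
    define j where "j = ?n - Suc i"
    have "Suc j < ?n" "0 < j" using i j_def by auto
    then have "\<not> ((xs!(j-1), xs!j) \<in> D \<and> (xs!Suc j, xs!j) \<in> D)" using assms unfolding is_trek_def no_collider_def by blast
    moreover have "rev xs ! i = xs ! j" "rev xs ! Suc i = xs ! (j - 1)" "rev xs ! (i - 1) = xs ! Suc j"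
      using i j_def by (auto simp: rev_nth Suc_diff_Suc)
    ultimately show "\<not> ((rev xs ! (i - 1), rev xs ! i) \<in> D \<and> (rev xs ! Suc i, rev xs ! i) \<in> D)" by auto
  qed
qed



lemma trek_ext:
  assumes ac: "acyclic D" and t: "trek_between D u y" and e: "(y,v) \<in> D"
  shows "trek_between D u v"
proof -
  obtain xs where xs: "is_trek D xs" "hd xs = u" "last xs = y" using t unfolding trek_between_def by blast
  have ne: "xs \<noteq> []" using xs unfolding is_trek_def is_path_def by simp
  show ?thesis
  proof (cases "v \<in> set xs")
    case True
    then obtain k where k: "k < length xs" "xs ! k = v" by (auto simp: in_set_conv_nth)
    have "is_trek D (take (Suc k) xs)" using trek_take[OF xs(1) k(1)] .
    moreover have "hd (take (Suc k) xs) = u" using xs(2) ne by simp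
    moreover have "last (take (Suc k) xs) = v" using k by (simp add: take_Suc_conv_app_nth)
    ultimately show ?thesis unfolding trek_between_def by blast
  next
    case False
    have "(v, y) \<notin> D"
    proof
      assume "(v,y) \<in> D"
      with e have "(y,y) \<in> D\<^sup>+" by auto
      then show False using ac unfolding acyclic_def by blast
    qed
    then have "is_trek D (xs @ [v])" using trek_snoc[OF xs(1)] xs(3) e False by simp
    moreover have "hd (xs @ [v]) = u" using xs(2) ne by simp
    ultimately show ?thesis unfolding trek_between_def by fastforce
  qed
qed

lemma trek_refl: "trek_between D u u"
  unfolding trek_between_def is_trek_def is_path_def no_collider_def
  by (rule exI[of _ "[u]"]) simp

lemma trek_sym: "trek_between D u v \<Longrightarrow> trek_between D v u"
  unfolding trek_between_def using trek_rev
  by (metis hd_rev is_path_def is_trek_def last_rev)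

lemma anc_trek:
  assumes ac: "acyclic D" and zu: "(z,u) \<in> D\<^sup>*" and zv: "(z,v) \<in> D\<^sup>*"
  shows "trek_between D u v"
proof -
  have zu': "trek_between D z w" if "(z,w) \<in> D\<^sup>*" for w
    using that
  proof (induction rule: rtrancl_induct)
    case base then show ?case by (rule trek_refl)
  next
    case (step y w) then show ?case using trek_ext[OF ac step.IH step.hyps(2)] by simp
  qed
  have uz: "trek_between D u z" using zu'[OF zu] by (rule trek_sym)
  have "trek_between D u w" if "(z,w) \<in> D\<^sup>*" for w
    using that
  proof (induction rule: rtrancl_induct)
    case base then show ?case by (rule uz)
  next
    case (step y w) then show ?case using trek_ext[OF ac step.IH step.hyps(2)] by simp
  qed
  then show ?thesis using zv by simp
qed

definition Sr :: "('a \<times> 'a) set \<Rightarrow> 'a \<Rightarrow> 'a set" where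
  "Sr D x = {s. (\<forall>y. (y,s) \<notin> D) \<and> (s,x) \<in> D\<^sup>*}"

lemma Sr_anc:
  assumes wf: "wf D" and zx: "(z,x) \<in> D\<^sup>*"
  shows "\<exists>s. s \<in> Sr D x \<and> (s,z) \<in> D\<^sup>*"
proof -
  have "z \<in> {y. (y,z) \<in> D\<^sup>*}" by simp
  then obtain m where m: "m \<in> {y. (y,z) \<in> D\<^sup>*}" "\<And>y. (y,m) \<in> D \<Longrightarrow> y \<notin> {y. (y,z) \<in> D\<^sup>*}"
    using wfE_min[OF wf, of z "{y. (y,z) \<in> D\<^sup>*}"] by blast
  have "\<forall>y. (y,m) \<notin> D"
  proof (intro allI notI)
    fix y assume "(y,m) \<in> D"
    moreover then have "(y,z) \<in> D\<^sup>*" using m(1) by (simp add: converse_rtrancl_into_rtrancl)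
    ultimately show False using m(2) by blast
  qed
  then show ?thesis using m(1) zx unfolding Sr_def by (auto intro: rtrancl_trans)
qed

lemma Sr_src: "s \<in> Sr D x \<Longrightarrow> Sr D s = {s}"
  unfolding Sr_def by (auto elim: rtranclE)

lemma Sr_sub:
  assumes "D \<subseteq> V \<times> V" "x \<in> V" shows "Sr D x \<subseteq> V"
proof
  fix s assume "s \<in> Sr D x"
  then have "(s,x) \<in> D\<^sup>*" unfolding Sr_def by simp
  then show "s \<in> V" using assms by (cases rule: converse_rtranclE) auto
qed

lemma udg_Sr:
  assumes "is_dag V D"
  shows "udg V D = {(u,v). u \<in> V \<and> v \<in> V \<and> u \<noteq> v \<and> Sr D u \<inter> Sr D v \<noteq> {}}"
proof -
  have ac: "acyclic D" and sub: "D \<subseteq> V \<times> V" and fin: "finite V" using assms unfolding is_dag_def by auto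
  have "finite D" using sub fin by (meson finite_SigmaI finite_subset)
  then have wf: "wf D" using ac by (rule finite_acyclic_wf)
  have "trek_between D u v \<longleftrightarrow> Sr D u \<inter> Sr D v \<noteq> {}" for u v
  proof
    assume "trek_between D u v"
    then have "\<exists>z. (z,u) \<in> D\<^sup>* \<and> (z,v) \<in> D\<^sup>*" by (rule trek_anc)
    then obtain z where z: "(z,u) \<in> D\<^sup>*" "(z,v) \<in> D\<^sup>*" by blast
    have "\<exists>s. s \<in> Sr D u \<and> (s,z) \<in> D\<^sup>*" using wf z(1) by (rule Sr_anc)
    then obtain s where s1: "s \<in> Sr D u" and s2: "(s,z) \<in> D\<^sup>*" by blast
    have s3: "\<forall>y. (y,s) \<notin> D" using s1 unfolding Sr_def by simp
    have "(s,v) \<in> D\<^sup>*" using s2 z(2) by (rule rtrancl_trans)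
    then have "s \<in> Sr D v" using s3 unfolding Sr_def by simp
    then show "Sr D u \<inter> Sr D v \<noteq> {}" using s1 by blast
  next
    assume "Sr D u \<inter> Sr D v \<noteq> {}"
    then obtain s where "s \<in> Sr D u" "s \<in> Sr D v" by blast
    then have "(s,u) \<in> D\<^sup>*" "(s,v) \<in> D\<^sup>*" unfolding Sr_def by simp_all
    then show "trek_between D u v" by (rule anc_trek[OF ac])
  qed
  then show ?thesis unfolding udg_def by simp
qed



lemma abstract_main:
  fixes V :: "'a set" and U :: "('a \<times> 'a) set" and S :: "'a \<Rightarrow> 'a set"
  assumes fin: "finite V"
    and U: "U = {(u,v). u \<in> V \<and> v \<in> V \<and> u \<noteq> v \<and> S u \<inter> S v \<noteq> {}}"
    and ne: "\<And>x. x \<in> V \<Longrightarrow> S x \<noteq> {}"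
    and sub: "\<And>x. x \<in> V \<Longrightarrow> S x \<subseteq> V"
    and src: "\<And>x s. x \<in> V \<Longrightarrow> s \<in> S x \<Longrightarrow> S s = {s}"
  shows "\<exists>D. is_dag V D \<and> init_CPDAG U = cpdag V D"
proof -
  obtain f :: "'a \<Rightarrow> nat" where finj: "inj_on f V"
    using finite_imp_inj_to_nat_seg[OF fin] by meson
  define Dg where "Dg g = {(a,b). (a,b)\<in>U \<and> (S a \<subset> S b \<or> (S a = S b \<and> (g a :: int) < g b))}" for g
  define U' where "U' = {(a,b). (a,b)\<in>U \<and> (S a \<subseteq> S b \<or> S b \<subseteq> S a)}"
  define VS where "VS = {(a,c,b). (a,c)\<in>U \<and> (b,c)\<in>U \<and> S a \<subset> S c \<and> S b \<subset> S c \<and> a\<noteq>b \<and> (a,b)\<notin>U'}"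
  have Ui: "(a,b) \<in> U \<longleftrightarrow> a \<in> V \<and> b \<in> V \<and> a \<noteq> b \<and> S a \<inter> S b \<noteq> {}" for a b
    using U by simp
  have Usym: "(a,b) \<in> U \<Longrightarrow> (b,a) \<in> U" for a b using Ui by blast
  have skel: "skeleton (Dg g) = U'" if "inj_on g V" for g
  proof
    show "skeleton (Dg g) \<subseteq> U'" unfolding skeleton_def Dg_def U'_def using Usym by auto
  next
    show "U' \<subseteq> skeleton (Dg g)"
    proof
      fix p assume "p \<in> U'"
      then obtain a b where p: "p = (a,b)" "(a,b) \<in> U" "S a \<subseteq> S b \<or> S b \<subseteq> S a" unfolding U'_def by auto
      have "a \<in> V" "b \<in> V" "a \<noteq> b" using p Ui by auto
      then have "g a \<noteq> g b" using that by (meson inj_on_eq_iff)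
      have "(a,b) \<in> Dg g \<or> (b,a) \<in> Dg g"
      proof (cases "S a = S b")
        case True
        then show ?thesis using p(2) Usym[OF p(2)] \<open>g a \<noteq> g b\<close> unfolding Dg_def
          by (cases "g a < g b") auto
      next
        case False
        then show ?thesis using p(2,3) Usym[OF p(2)] unfolding Dg_def by blast
      qed
      then show "p \<in> skeleton (Dg g)" using p(1) unfolding skeleton_def by blast
    qed
  qed
  have vs: "v_structures (Dg g) = VS" if ginj: "inj_on g V" for g
  proof
    show "v_structures (Dg g) \<subseteq> VS"
    proof
      fix q assume q: "q \<in> v_structures (Dg g)"
      then obtain a c b where qq: "q = (a,c,b)" "(a,c) \<in> Dg g" "(b,c) \<in> Dg g" "a \<noteq> b" "(a,b) \<notin> U'"
        unfolding v_structures_def skel[OF ginj] by auto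
      have V: "a \<in> V" "b \<in> V" "c \<in> V" using qq Ui unfolding Dg_def by auto
      have "S a \<subset> S c"
      proof (rule ccontr)
        assume "\<not> S a \<subset> S c"
        then have "S a = S c" using qq unfolding Dg_def by auto
        moreover have "S b \<subseteq> S c" using qq unfolding Dg_def by auto
        ultimately have "(a,b) \<in> U'" using V ne[of b] qq(4) unfolding U'_def Ui by auto
        then show False using qq by simp
      qed
      moreover have "S b \<subset> S c"
      proof (rule ccontr)
        assume "\<not> S b \<subset> S c"
        then have "S b = S c" using qq unfolding Dg_def by auto
        moreover have "S a \<subseteq> S c" using qq unfolding Dg_def by auto
        ultimately have "(a,b) \<in> U'" using V ne[of a] qq(4) unfolding U'_def Ui by auto
        then show False using qq by simp
      qed
      ultimately show "q \<in> VS" using qq unfolding VS_def Dg_def by auto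
    qed
  next
    show "VS \<subseteq> v_structures (Dg g)"
      unfolding VS_def v_structures_def skel[OF ginj] by (auto simp: Dg_def)
  qed
  have dag: "is_dag V (Dg g)" for g
  proof -
    have lt: "S x \<subset> S y \<or> (S x = S y \<and> g x < g y)" if "(x,y) \<in> (Dg g)\<^sup>+" for x y
      using that
    proof (induction rule: trancl_induct)
      case (base y) then show ?case unfolding Dg_def by auto
    next
      case (step y z) then show ?case unfolding Dg_def by auto
    qed
    have "acyclic (Dg g)" unfolding acyclic_def using lt by blast
    moreover have "Dg g \<subseteq> V \<times> V" unfolding Dg_def Ui by auto
    ultimately show ?thesis using fin unfolding is_dag_def by auto
  qed
  define g1 :: "'a \<Rightarrow> int" where "g1 x = int (f x)" for x
  define g2 :: "'a \<Rightarrow> int" where "g2 x = - int (f x)" for x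
  have i1: "inj_on g1 V" using finj unfolding g1_def inj_on_def by auto
  have i2: "inj_on g2 V" using finj unfolding g2_def inj_on_def by auto
  have meq: "markov_equiv (Dg g1) (Dg g2)"
    unfolding markov_equiv_def using skel[OF i1] skel[OF i2] vs[OF i1] vs[OF i2] by simp
  have dir: "cpdag_dir V (Dg g1) = {(a,b). (a,b) \<in> U \<and> S a \<subset> S b}"
  proof
    show "cpdag_dir V (Dg g1) \<subseteq> {(a,b). (a,b) \<in> U \<and> S a \<subset> S b}"
    proof
      fix p assume p: "p \<in> cpdag_dir V (Dg g1)"
      then have "p \<in> Dg g1" "p \<in> Dg g2" using dag[of g2] meq unfolding cpdag_dir_def by auto
      then show "p \<in> {(a,b). (a,b) \<in> U \<and> S a \<subset> S b}" unfolding Dg_def g1_def g2_def by auto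
    qed
  next
    show "{(a,b). (a,b) \<in> U \<and> S a \<subset> S b} \<subseteq> cpdag_dir V (Dg g1)"
    proof
      fix p assume "p \<in> {(a,b). (a,b) \<in> U \<and> S a \<subset> S b}"
      then obtain a b where pab: "p = (a,b)" and ab: "(a,b) \<in> U" "S a \<subset> S b" by blast
      have V: "a \<in> V" "b \<in> V" using ab Ui by auto
      obtain t where t: "t \<in> S b" "t \<notin> S a" using ab by auto
      have St: "S t = {t}" using src[OF V(2) t(1)] .
      have tV: "t \<in> V" using sub[OF V(2)] t by auto
      have tb: "t \<noteq> b"
      proof
        assume "t = b" then have "S b = {b}" using St by simp
        then show False using ab ne[OF V(1)] by auto
      qed
      have ta: "a \<noteq> t" using St t by auto
      have tbU: "(t,b) \<in> U" using Ui tV V tb St t by auto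
      have strict: "S t \<subset> S b"
      proof -
        have "S b \<noteq> {t}" using ab ne[OF V(1)] t by auto
        then show ?thesis using St t by auto
      qed
      have atU: "(a,t) \<notin> U'" using Ui St t unfolding U'_def by auto
      have inVS: "(a,b,t) \<in> VS" unfolding VS_def using ab tbU strict ta atU by auto
      have "(a,b) \<in> Dg g1" using ab unfolding Dg_def by auto
      moreover have "(a,b) \<in> D'" if "is_dag V D'" "markov_equiv (Dg g1) D'" for D'
      proof -
        have "(a,b,t) \<in> v_structures D'" using that inVS vs[OF i1] unfolding markov_equiv_def by simp
        then show ?thesis unfolding v_structures_def by auto
      qed
      ultimately show "p \<in> cpdag_dir V (Dg g1)" unfolding cpdag_dir_def pab by auto
    qed
  qed
  have orient: "orient U a b \<longleftrightarrow> (a,b) \<in> U \<and> \<not> S b \<subseteq> S a" for a b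
  proof
    assume o: "orient U a b"
    then obtain c where c: "(a,b) \<in> U" "(c,b) \<in> U" "c \<noteq> a" "(a,c) \<notin> U" unfolding orient_def by auto
    show "(a,b) \<in> U \<and> \<not> S b \<subseteq> S a"
    proof (intro conjI notI)
      show "(a,b) \<in> U" using c by simp
      assume "S b \<subseteq> S a"
      then have "(a,c) \<in> U" using c Ui by auto
      then show False using c by simp
    qed
  next
    assume h: "(a,b) \<in> U \<and> \<not> S b \<subseteq> S a"
    then obtain s where s: "s \<in> S b" "s \<notin> S a" by auto
    have V: "a \<in> V" "b \<in> V" using h Ui by auto
    have Ss: "S s = {s}" using src[OF V(2) s(1)] .
    have sV: "s \<in> V" using sub[OF V(2)] s by auto
    have sb: "s \<noteq> b"
    proof
      assume "s = b" then have "S b = {b}" using Ss by simp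
      then show False using h s Ui by auto
    qed
    have "(s,b) \<in> U" using Ui sV V sb Ss s by auto
    moreover have "s \<noteq> a" using Ss s by auto
    moreover have "(a,s) \<notin> U" using Ui Ss s by auto
    ultimately show "orient U a b" using h unfolding orient_def by blast
  qed
  have "init_CPDAG U = cpdag V (Dg g1)"
  proof -
    have e1: "{(a, b). orient U a b \<and> \<not> orient U b a} = {(a,b). (a,b) \<in> U \<and> S a \<subset> S b}"
      using Usym by (auto simp: orient)
    have e2: "{(a, b). (a, b) \<in> U \<and> \<not> orient U a b \<and> \<not> orient U b a} =
       {(i, j). (i, j) \<in> U' \<and> (i, j) \<notin> {(a,b). (a,b) \<in> U \<and> S a \<subset> S b} \<and> (j, i) \<notin> {(a,b). (a,b) \<in> U \<and> S a \<subset> S b}}"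
      using Usym unfolding U'_def by (auto simp: orient)
    show ?thesis unfolding init_CPDAG_def cpdag_def dir skel[OF i1] e1 e2 by simp
  qed
  then show ?thesis using dag by blast
qed


theorem lemma5p3:
  fixes V :: "'a set" and U :: "('a \<times> 'a) set"
  assumes "UEC_representative V U"
  shows "\<exists>D. is_dag V D \<and> init_CPDAG U = cpdag V D"
proof -
  obtain D where d: "is_dag V D" and u: "U = udg V D" using assms unfolding UEC_representative_def by blast
  have ac: "acyclic D" and sub: "D \<subseteq> V \<times> V" and fin: "finite V" using d unfolding is_dag_def by auto
  have "finite D" using sub fin by (meson finite_SigmaI finite_subset)
  then have wf: "wf D" using ac by (rule finite_acyclic_wf)
  have U: "U = {(u,v). u \<in> V \<and> v \<in> V \<and> u \<noteq> v \<and> Sr D u \<inter> Sr D v \<noteq> {}}"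
    using u udg_Sr[OF d] by simp
  have ne: "Sr D x \<noteq> {}" for x
  proof -
    have "\<exists>s. s \<in> Sr D x \<and> (s,x) \<in> D\<^sup>*" using wf rtrancl_refl by (rule Sr_anc)
    then show ?thesis by blast
  qed
  show ?thesis
    by (rule abstract_main[OF fin U ne Sr_sub[OF sub] Sr_src])
qed

end
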